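(* For every integer $n\ge3$, \[ \sum_{k=3}^{n}(-1)^{k-1}{n\brace k}(k-1)!\left[(H_{k-1})^2-H^{(2)}_{k-1}\right]H_k=\frac{n^2+2}{3}\,B_{n-3}. \]
   Context: $B_m$ is the $m$th Bernoulli number ($\frac{t}{e^t-1}=\sum_{m\ge0}B_m\frac{t^m}{m!}$). ${n\brace k}$ is the Stirling number of the second kind. $H_k=\sum_{i=1}^k 1/i$ and $H_k^{(2)}=\sum_{i=1}^k 1/i^2$. *)

theory Defs
  imports "HOL-Analysis.Analysis" "HOL-Computational_Algebra.Formal_Power_Series" "HOL-Combinatorics.Stirling"
begin

definition bernoulli_num :: "nat \<Rightarrow> real" where
  "bernoulli_num m = fact m * fps_nth (fps_X / (fps_exp 1 - 1)) m"

definition harm2 :: "nat \<Rightarrow> real" where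
  "harm2 k = (\<Sum>i=1..k. 1 / (real i)^2)"

end

theory Submission
  imports Defs
begin

lemma bern_rec:
  "(\<Sum>j<N. real (N choose j) * bernoulli_num j) = (if N = 1 then 1 else 0)"
proof -
  define E :: "real fps" where "E = fps_exp 1 - 1"
  define G :: "real fps" where "G = fps_X / E"
  have E0: "E \<noteq> 0"
  proof
    assume "E = 0"
    hence "fps_nth E 1 = 0" by simp
    thus False by (simp add: E_def)
  qed
  have sE: "subdegree E = 1"
    by (rule subdegreeI) (auto simp: E_def)
  have GE: "G * E = fps_X"
    unfolding G_def using fps_times_divide_eq[OF E0] sE by simp
  have "fps_nth (G * E) N = (\<Sum>i=0..N. fps_nth G i * fps_nth E (N - i))" by (rule fps_mult_nth)
  also have "\<dots> = (\<Sum>i<N. fps_nth G i * fps_nth E (N - i))"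
  proof -
    have "(\<Sum>i=0..N. fps_nth G i * fps_nth E (N - i)) = (\<Sum>i<Suc N. fps_nth G i * fps_nth E (N - i))"
      by (simp add: atLeast0AtMost lessThan_Suc_atMost)
    also have "\<dots> = (\<Sum>i<N. fps_nth G i * fps_nth E (N - i))" by (simp add: E_def)
    finally show ?thesis .
  qed
  also have "\<dots> = (\<Sum>i<N. bernoulli_num i / fact i / fact (N - i))"
    by (intro sum.cong refl) (simp add: E_def bernoulli_num_def G_def)
  finally have "(\<Sum>i<N. bernoulli_num i / fact i / fact (N - i)) = (if N = 1 then 1 else 0)"
    using GE by (simp add: fps_X_def)
  hence "fact N * (\<Sum>i<N. bernoulli_num i / fact i / fact (N - i)) = (if N = 1 then 1 else 0)"
    by auto
  also have "fact N * (\<Sum>i<N. bernoulli_num i / fact i / fact (N - i)) = (\<Sum>j<N. real (N choose j) * bernoulli_num j)"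
    unfolding sum_distrib_left
    by (intro sum.cong refl) (simp add: binomial_fact field_simps)
  finally show ?thesis by simp
qed

lemma Stirling_shift:
  fixes c :: "nat \<Rightarrow> real"
  shows "(\<Sum>k\<le>Suc n. (-1)^k * c k * real (Stirling (Suc n) k))
       = (\<Sum>k\<le>n. (-1)^k * real (Stirling n k) * (real k * c k - c (Suc k)))"
proof -
  have "(\<Sum>k\<le>Suc n. (-1)^k * c k * real (Stirling (Suc n) k))
      = (\<Sum>k\<le>n. (-1)^(Suc k) * c (Suc k) * real (Stirling (Suc n) (Suc k)))"
    by (subst sum.atMost_Suc_shift) simp
  also have "\<dots> = (\<Sum>k\<le>n. (-1)^(Suc k) * real (Suc k) * c (Suc k) * real (Stirling n (Suc k)))
                 + (\<Sum>k\<le>n. (-1)^(Suc k) * c (Suc k) * real (Stirling n k))"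
    by (simp add: sum.distrib[symmetric] algebra_simps)
  also have "(\<Sum>k\<le>n. (-1)^(Suc k) * real (Suc k) * c (Suc k) * real (Stirling n (Suc k)))
           = (\<Sum>k\<le>Suc n. (-1)^k * real k * c k * real (Stirling n k))"
    unfolding sum.atMost_Suc_shift by simp
  also have "\<dots> = (\<Sum>k\<le>n. (-1)^k * real k * c k * real (Stirling n k))"
    by simp
  finally show ?thesis
    by (simp add: sum.distrib[symmetric] algebra_simps)
qed

definition stT :: "nat \<Rightarrow> nat \<Rightarrow> real" where
  "stT n m = (\<Sum>k\<le>n. (-1)^k * real (stirling k m) * real (Stirling n k))"

lemma stT_eq: "stT n m = (if n = m then (-1)^m else 0)"
proof (induction n arbitrary: m)
  case 0
  then show ?case by (cases m) (simp_all add: stT_def)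
next
  case (Suc n)
  show ?case
  proof (cases m)
    case 0
    have "stT (Suc n) 0 = 0" unfolding stT_def
    proof (intro sum.neutral ballI)
      fix k show "(-1)^k * real (stirling k 0) * real (Stirling (Suc n) k) = 0"
        by (cases k) auto
    qed
    then show ?thesis using 0 by simp
  next
    case (Suc m')
    have "stT (Suc n) m = (\<Sum>k\<le>n. (-1)^k * real (Stirling n k) *
            (real k * real (stirling k m) - real (stirling (Suc k) m)))"
      unfolding stT_def by (rule Stirling_shift)
    also have "\<dots> = - stT n m'"
      unfolding stT_def sum_negf[symmetric] using Suc
      by (intro sum.cong refl) (simp add: algebra_simps)
    finally show ?thesis using Suc.IH[of m'] Suc by simp
  qed
qed

lemma Stirling_binom_sum:
  "(\<Sum>i\<le>n. (n choose i) * Stirling i k) = Stirling (Suc n) (Suc k)"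
proof (induction n arbitrary: k)
  case 0
  then show ?case by (cases k) simp_all
next
  case (Suc n)
  have "(\<Sum>i\<le>Suc n. (Suc n choose i) * Stirling i k)
      = Stirling 0 k + (\<Sum>i\<le>n. (Suc n choose Suc i) * Stirling (Suc i) k)"
    by (subst sum.atMost_Suc_shift) simp
  also have "\<dots> = (Stirling 0 k + (\<Sum>i\<le>n. (n choose Suc i) * Stirling (Suc i) k))
                  + (\<Sum>i\<le>n. (n choose i) * Stirling (Suc i) k)"
    by (simp add: sum.distrib algebra_simps)
  also have "Stirling 0 k + (\<Sum>i\<le>n. (n choose Suc i) * Stirling (Suc i) k)
           = (\<Sum>i\<le>Suc n. (n choose i) * Stirling i k)"
    unfolding sum.atMost_Suc_shift by simp
  also have "\<dots> = (\<Sum>i\<le>n. (n choose i) * Stirling i k)" by simp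
  also have "\<dots> = Stirling (Suc n) (Suc k)" by (rule Suc.IH)
  finally have eq: "(\<Sum>i\<le>Suc n. (Suc n choose i) * Stirling i k)
     = Stirling (Suc n) (Suc k) + (\<Sum>i\<le>n. (n choose i) * Stirling (Suc i) k)" .
  show ?case
  proof (cases k)
    case 0
    then show ?thesis using eq by simp
  next
    case (Suc k')
    have "(\<Sum>i\<le>n. (n choose i) * Stirling (Suc i) k)
        = Suc k' * (\<Sum>i\<le>n. (n choose i) * Stirling i (Suc k')) + (\<Sum>i\<le>n. (n choose i) * Stirling i k')"
      using Suc by (simp add: sum.distrib sum_distrib_left algebra_simps)
    also have "\<dots> = Suc k' * Stirling (Suc n) (Suc (Suc k')) + Stirling (Suc n) (Suc k')"
      using Suc.IH by simp
    finally show ?thesis using eq Suc by simp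
  qed
qed

lemma Stirling_binom_sum_less:
  "(\<Sum>i<n. real (n choose i) * real (Stirling i k)) = real (Suc k) * real (Stirling n (Suc k))"
proof -
  have "(\<Sum>i\<le>n. (n choose i) * Stirling i k) = (\<Sum>i<n. (n choose i) * Stirling i k) + Stirling n k"
    by (simp add: lessThan_Suc_atMost[symmetric])
  hence "(\<Sum>i<n. (n choose i) * Stirling i k) = Suc k * Stirling n (Suc k)"
    using Stirling_binom_sum[of n k] by simp
  hence "real (\<Sum>i<n. (n choose i) * Stirling i k) = real (Suc k * Stirling n (Suc k))" by simp
  thus ?thesis by (simp add: algebra_simps)
qed

definition stR :: "nat \<Rightarrow> nat \<Rightarrow> real" where
  "stR m n = (\<Sum>k\<le>n. (-1)^k * (real (stirling (Suc k) m) / real (Suc k)) * real (Stirling n k))"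

lemma stR_sum:
  assumes "m \<ge> 1"
  shows "(\<Sum>i<n. real (n choose i) * stR m i) = - (if n = m then (-1)^m else 0)"
proof -
  define c where "c k = real (stirling (Suc k) m) / real (Suc k)" for k
  have ext: "(\<Sum>k\<le>i. (-1)^k * c k * real (Stirling i k)) = (\<Sum>k\<le>n. (-1)^k * c k * real (Stirling i k))"
    if "i < n" for i
    by (rule sum.mono_neutral_left) (use that in auto)
  have "(\<Sum>i<n. real (n choose i) * stR m i)
      = (\<Sum>i<n. \<Sum>k\<le>n. real (n choose i) * ((-1)^k * c k * real (Stirling i k)))"
    unfolding stR_def c_def[symmetric] using ext by (simp add: sum_distrib_left)
  also have "\<dots> = (\<Sum>k\<le>n. (-1)^k * c k * (\<Sum>i<n. real (n choose i) * real (Stirling i k)))"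
    by (subst sum.swap) (simp add: sum_distrib_left algebra_simps)
  also have "\<dots> = (\<Sum>k\<le>n. (-1)^k * real (stirling (Suc k) m) * real (Stirling n (Suc k)))"
    unfolding Stirling_binom_sum_less c_def by (intro sum.cong refl) simp
  also have "\<dots> = - (\<Sum>k\<le>n. (-1)^(Suc k) * real (stirling (Suc k) m) * real (Stirling n (Suc k)))"
    by (simp add: sum_negf[symmetric])
  also have "(\<Sum>k\<le>n. (-1)^(Suc k) * real (stirling (Suc k) m) * real (Stirling n (Suc k)))
      = (\<Sum>k\<le>Suc n. (-1)^k * real (stirling k m) * real (Stirling n k))"
    using assms unfolding sum.atMost_Suc_shift by simp
  also have "\<dots> = stT n m" unfolding stT_def by simp
  finally show ?thesis by (simp add: stT_eq)
qed

lemma binom_uniq: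
  fixes a b :: "nat \<Rightarrow> real"
  assumes "\<And>n. (\<Sum>i<n. real (n choose i) * a i) = (\<Sum>i<n. real (n choose i) * b i)"
  shows "a n = b n"
proof (induction n rule: less_induct)
  case (less n)
  have "(\<Sum>i<Suc n. real (Suc n choose i) * a i) = (\<Sum>i<Suc n. real (Suc n choose i) * b i)"
    by (rule assms)
  moreover have "(\<Sum>i<n. real (Suc n choose i) * a i) = (\<Sum>i<n. real (Suc n choose i) * b i)"
    using less by simp
  ultimately have "real (Suc n choose n) * a n = real (Suc n choose n) * b n" by simp
  thus ?case by simp
qed

lemma sum_shift_zero:
  fixes f :: "nat \<Rightarrow> real"
  assumes "\<And>i. i < j \<Longrightarrow> f i = 0"
  shows "(\<Sum>i<j+M. f i) = (\<Sum>l<M. f (j + l))"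
proof (induction M)
  case 0
  then show ?case using assms by simp
next
  case (Suc M)
  then show ?case by simp
qed

lemma bern_binom_sum:
  "(\<Sum>i<n. real (n choose i) * (real (i choose j) * bernoulli_num (i - j)))
     = (if n = Suc j then real (Suc j) else 0)"
proof (cases "n \<le> j")
  case True
  have "(\<Sum>i<n. real (n choose i) * (real (i choose j) * bernoulli_num (i - j))) = 0"
    using True by (intro sum.neutral) auto
  then show ?thesis using True by simp
next
  case False
  define M where "M = n - j"
  have M: "n = j + M" "M \<ge> 1" using False unfolding M_def by auto
  have "(\<Sum>i<n. real (n choose i) * (real (i choose j) * bernoulli_num (i - j)))
      = (\<Sum>l<M. real (n choose (j + l)) * (real ((j + l) choose j) * bernoulli_num l))"
    unfolding M(1) by (subst sum_shift_zero) auto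
  also have "\<dots> = (\<Sum>l<M. real (n choose j) * (real (M choose l) * bernoulli_num l))"
  proof (intro sum.cong refl)
    fix l assume "l \<in> {..<M}"
    have "(n choose (j + l)) * ((j + l) choose j) = (n choose j) * ((n - j) choose (j + l - j))"
      by (rule choose_mult) (use \<open>l \<in> {..<M}\<close> M in auto)
    also have "(n - j) choose (j + l - j) = M choose l" using M by simp
    finally have "real ((n choose (j + l)) * ((j + l) choose j)) = real ((n choose j) * (M choose l))"
      by (simp only:)
    hence "real (n choose (j + l)) * real ((j + l) choose j) = real (n choose j) * real (M choose l)"
      by (simp only: of_nat_mult)
    thus "real (n choose (j + l)) * (real ((j + l) choose j) * bernoulli_num l)
        = real (n choose j) * (real (M choose l) * bernoulli_num l)"
      by (simp only: mult.assoc[symmetric])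
  qed
  also have "\<dots> = real (n choose j) * (if M = 1 then 1 else 0)"
    by (simp add: sum_distrib_left[symmetric] bern_rec)
  also have "\<dots> = (if n = Suc j then real (Suc j) else 0)"
    using M by (cases "M = 1") simp_all
  finally show ?thesis .
qed

definition stB :: "nat \<Rightarrow> nat \<Rightarrow> real" where
  "stB m i = (-1)^(m+1) / real m * (real (i choose (m - 1)) * bernoulli_num (i - (m - 1)))"

lemma stB_sum:
  assumes "m \<ge> 1"
  shows "(\<Sum>i<n. real (n choose i) * stB m i) = - (if n = m then (-1)^m else 0)"
proof -
  have "(\<Sum>i<n. real (n choose i) * stB m i)
     = (-1)^(m+1) / real m * (\<Sum>i<n. real (n choose i) * (real (i choose (m - 1)) * bernoulli_num (i - (m - 1))))"
    unfolding stB_def sum_distrib_left by (intro sum.cong refl) (simp add: algebra_simps)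
  also have "\<dots> = (-1)^(m+1) / real m * (if n = m then real m else 0)"
    using assms by (subst bern_binom_sum) auto
  also have "\<dots> = - (if n = m then (-1)^m else 0)"
    using assms by auto
  finally show ?thesis .
qed

lemma stR_stB:
  assumes "m \<ge> 1"
  shows "stR m n = stB m n"
  by (rule binom_uniq) (simp only: stR_sum[OF assms] stB_sum[OF assms])

definition stV :: "nat \<Rightarrow> nat \<Rightarrow> real" where
  "stV m n = (\<Sum>k\<le>n. (-1)^k * (real (stirling k m) * harm k) * real (Stirling n k))"

lemma stV_0: "stV 0 n = 0"
  unfolding stV_def
proof (intro sum.neutral ballI)
  fix k show "(-1)^k * (real (stirling k 0) * harm k) * real (Stirling n k) = (0::real)"
    by (cases k) (auto simp: harm_def)
qed

lemma stV_Suc: "stV (Suc m) (Suc n) = - stV m n - stR (Suc m) n"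
proof -
  define c where "c k = real (stirling k (Suc m)) * harm k" for k
  have key: "real k * c k - c (Suc k) = -(real (stirling k m) * harm k)
              - real (stirling (Suc k) (Suc m)) / real (Suc k)" for k
  proof -
    have "real (stirling (Suc k) (Suc m)) = real k * real (stirling k (Suc m)) + real (stirling k m)"
      by simp
    thus ?thesis unfolding c_def harm_Suc
      by (simp add: field_simps del: stirling.simps of_nat_Suc)
  qed
  have "stV (Suc m) (Suc n) = (\<Sum>k\<le>n. (-1)^k * real (Stirling n k) * (real k * c k - c (Suc k)))"
    unfolding stV_def c_def[symmetric] by (rule Stirling_shift)
  also have "\<dots> = (\<Sum>k\<le>n. - ((-1)^k * (real (stirling k m) * harm k) * real (Stirling n k))
        - (-1)^k * (real (stirling (Suc k) (Suc m)) / real (Suc k)) * real (Stirling n k))"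
    unfolding key by (intro sum.cong refl) (simp add: algebra_simps)
  also have "\<dots> = - stV m n - stR (Suc m) n"
    unfolding stV_def stR_def by (simp add: sum_subtractf sum_negf)
  finally show ?thesis .
qed

lemma harm2_Suc: "harm2 (Suc j) = harm2 j + 1 / (real (Suc j))^2"
  unfolding harm2_def by simp

lemma stirling_2_harm: "real (stirling (Suc j) 2) = fact j * harm j"
proof (cases "j = 0")
  case True then show ?thesis by (simp add: harm_def)
next
  case False
  then show ?thesis using of_nat_stirling_Suc_n_2[of j, where 'a=real]
    by (simp add: harm_def divide_inverse)
qed

lemma stirling_3_harm:
  "fact j * ((harm j)^2 - harm2 j) = 2 * real (stirling (Suc j) 3)"
proof (induction j)
  case 0
  then show ?case by (simp add: harm_def harm2_def numeral_3_eq_3)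
next
  case (Suc j)
  have e3: "Suc 2 = (3::nat)" by simp
  have s0: "stirling (Suc (Suc j)) 3 = Suc j * stirling (Suc j) 3 + stirling (Suc j) 2"
    using stirling.simps(4)[of "Suc j" 2] unfolding e3 .
  have s: "real (stirling (Suc (Suc j)) 3) = real (Suc j) * real (stirling (Suc j) 3) + real (stirling (Suc j) 2)"
    unfolding s0 by (simp only: of_nat_add of_nat_mult)
  have "fact (Suc j) * ((harm (Suc j))^2 - harm2 (Suc j))
      = real (Suc j) * (fact j * ((harm j)^2 - harm2 j)) + 2 * (fact j * harm j)"
    unfolding harm_Suc harm2_Suc
    by (simp add: field_simps power2_eq_square del: of_nat_Suc)
  also have "\<dots> = 2 * real (stirling (Suc (Suc j)) 3)"
    unfolding Suc.IH s stirling_2_harm[symmetric] by (simp add: algebra_simps)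
  finally show ?case .
qed

lemma choose2_real: "real (Suc (Suc p) choose 2) = (real p + 2) * (real p + 1) / 2"
  by (induction p) (simp_all add: field_simps numeral_2_eq_2)

lemma stV3: "stV 3 (p + 3) = - ((real (p+3))^2 + 2) / 6 * bernoulli_num p"
proof -
  have e1: "stV 1 (Suc p) = - bernoulli_num p"
    using stV_Suc[of 0 p] stR_stB[of 1 p] by (simp add: stV_0 stB_def)
  have e2: "stV 2 (Suc (Suc p)) = bernoulli_num p + (real p + 1) / 2 * bernoulli_num p"
    using stV_Suc[of 1 "Suc p"] stR_stB[of 2 "Suc p"] e1 by (simp add: stB_def numeral_2_eq_2)
  have e3: "stV 3 (Suc (Suc (Suc p))) = - stV 2 (Suc (Suc p)) - stB 3 (Suc (Suc p))"
    using stV_Suc[of 2 "Suc (Suc p)"] stR_stB[of 3 "Suc (Suc p)"] by (simp add: numeral_3_eq_3)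
  have b3: "stB 3 (Suc (Suc p)) = (real p + 2) * (real p + 1) / 6 * bernoulli_num p"
  proof -
    have a: "(3::nat) - 1 = 2" "Suc (Suc p) - 2 = p" "(3::nat) + 1 = 4" by simp_all
    show ?thesis unfolding stB_def a choose2_real by simp
  qed
  have pp: "p + 3 = Suc (Suc (Suc p))" by simp
  have "stV 3 (p + 3) = - (bernoulli_num p + (real p + 1) / 2 * bernoulli_num p)
          - (real p + 2) * (real p + 1) / 6 * bernoulli_num p"
    unfolding pp using e3 e2 b3 by simp
  thus ?thesis by (simp add: field_simps power2_eq_square)
qed

theorem mainTheorem3:
  fixes n :: nat
  assumes "n \<ge> 3"
  shows "(\<Sum>k=3..n. (-1::real)^(k-1) * real (Stirling n k) * fact (k-1)
            * ((harm (k-1))^2 - harm2 (k-1)) * harm k)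
         = (real n ^ 2 + 2) / 3 * bernoulli_num (n-3)"
proof -
  obtain p where p: "n = p + 3" using assms by (metis le_add_diff_inverse2)
  have "(\<Sum>k=3..n. (-1::real)^(k-1) * real (Stirling n k) * fact (k-1)
            * ((harm (k-1))^2 - harm2 (k-1)) * harm k)
      = (\<Sum>k=3..n. -2 * ((-1)^k * (real (stirling k 3) * harm k) * real (Stirling n k)))"
  proof (intro sum.cong refl)
    fix k assume "k \<in> {3..n}"
    then obtain j where j: "k = Suc j" by (cases k) auto
    have h: "fact (k-1) * ((harm (k-1))^2 - harm2 (k-1)) = 2 * real (stirling k 3)"
      using stirling_3_harm[of j] j by simp
    have sg: "(-1::real)^(k-1) = - ((-1)^k)" using j by simp
    have "(-1::real)^(k-1) * real (Stirling n k) * fact (k-1)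
            * ((harm (k-1))^2 - harm2 (k-1)) * harm k
        = (-1)^(k-1) * real (Stirling n k) * harm k * (fact (k-1) * ((harm (k-1))^2 - harm2 (k-1)))"
      by (simp only: mult_ac)
    also have "\<dots> = -2 * ((-1)^k * (real (stirling k 3) * harm k) * real (Stirling n k))"
      unfolding h sg by (simp only: mult_ac mult_minus_left mult_minus_right)
    finally show "(-1::real)^(k-1) * real (Stirling n k) * fact (k-1)
            * ((harm (k-1))^2 - harm2 (k-1)) * harm k
        = -2 * ((-1)^k * (real (stirling k 3) * harm k) * real (Stirling n k))" .
  qed
  also have "\<dots> = -2 * stV 3 n"
  proof -
    have "(\<Sum>k=3..n. (-1)^k * (real (stirling k 3) * harm k) * real (Stirling n k))
        = (\<Sum>k\<le>n. (-1)^k * (real (stirling k 3) * harm k) * real (Stirling n k))"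
      by (rule sum.mono_neutral_left) auto
    thus ?thesis unfolding stV_def sum_distrib_left[symmetric] by simp
  qed
  also have "\<dots> = (real n ^ 2 + 2) / 3 * bernoulli_num (n-3)"
    unfolding p stV3 by (simp add: algebra_simps)
  finally show ?thesis .
qed

end
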